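(* Let $\eta>0$, $T>0$, and let $N$ be a standard Gaussian random variable. Let $\beta\in[0,+\infty]$, $\theta>0$, $v>0$, and let $f$ be a measurable function which is bounded from below on $[0,\beta]$. Let $u$ be any real number if $\beta=+\infty$, and $u=-v\beta$ if $\beta<+\infty$. Write $\omega=W(\theta v\eta^2T)$, where $W$ is the Lambert function, and suppose that $$\frac{\omega}{\eta^{2}T}+\frac{\omega^2}{2\eta^{2}T}\leq \theta v\beta .$$ Define $$L_{f,\beta}(\theta)=\mathbb{E}\left(\exp\left(-\theta f\left(e^{\eta\sqrt{T}N}\right)1_{e^{\eta\sqrt{T}N}\leq\beta}\right)\right).$$ Then $L_{f,\beta}(\theta)=L_\beta(\theta)\,I_{f,\beta}(\theta)$, where $$L_\beta(\theta)=\exp\left(-\left(\theta u+\frac{\omega}{\eta^{2}T}+\frac{\omega^2}{2\eta^{2}T}\right)\right),$$ $$I_{f,\beta}(\theta)=\mathbb{E}\left(\exp\left[-\theta\left(f\left(\frac{\omega}{\theta v\eta^2T}e^{\eta\sqrt{T}N}\right)-u-\frac{\omega}{\theta\eta^2T}e^{\eta\sqrt{T}N}\right)1_{N\leq \frac{\ln\beta}{\eta\sqrt{T}}+\frac{\omega}{\eta\sqrt{T}}}\right]\phi_\beta(N,\theta)\right),$$ $$\phi_\beta(y,\theta)=\exp\left(-\frac{\omega}{\eta^2T}\left(e^{\eta\sqrt{T}y}-1-\eta\sqrt{T}y\right)\right)\exp\left(\left(\frac{\omega}{\eta^2T}e^{\eta\sqrt{T}y}-\theta v\beta\right)_+\right),$$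 with the conventions $\ln(+\infty)=+\infty$, $\ln 0=-\infty$ and $(-\infty)_+=0$.
   Context: The Lambert function $W:(-1/e,+\infty)\to(-1,+\infty)$ is the inverse of the strictly increasing bijection $x\in(-1,+\infty)\mapsto xe^x\in(-1/e,+\infty)$. For real $x$, $x_+=\max(x,0)$. When $\beta=+\infty$, the indicator $1_{e^{\eta\sqrt T N}\le\beta}$ is identically $1$ and the hypothesis inequality holds trivially. *)

theory Defs
  imports "HOL-Probability.Probability"
begin

definition lambertW :: "real \<Rightarrow> real" where
  "lambertW y = (THE w. w > -1 \<and> w * exp w = y)"

definition ereal_ln :: "ereal \<Rightarrow> ereal" where
  "ereal_ln b = (if b = \<infinity> then \<infinity> else if b \<le> 0 then -\<infinity> else ereal (ln (real_of_ereal b)))"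

definition ereal_pos_part :: "ereal \<Rightarrow> real" where
  "ereal_pos_part x = real_of_ereal (max x 0)"

end

theory Submission
  imports Defs
begin
lemma lambertW_prop:
  assumes y: "y > 0"
  shows "lambertW y > 0 \<and> lambertW y * exp (lambertW y) = y"
proof -
  have ex: "\<exists>w. 0 \<le> w \<and> w \<le> y \<and> w * exp w = y"
  proof (rule IVT')
    show "0 * exp 0 \<le> y" using y by simp
    show "y \<le> y * exp y" using y by simp
    show "(0::real) \<le> y" using y by simp
    show "continuous_on {0..y} (\<lambda>w. w * exp w)" by (intro continuous_intros)
  qed
  then obtain w where w: "w * exp w = y" by blast
  have wpos: "w > 0" using w y by (metis exp_gt_zero linorder_not_less mult_nonpos_nonneg order_less_imp_le not_le)
  have uniq: "z = w" if "z > -1" "z * exp z = y" for z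
  proof -
    have zpos: "z > 0" using that y by (metis exp_gt_zero linorder_not_less mult_nonpos_nonneg order_less_imp_le not_le)
    show ?thesis
    proof (rule ccontr)
      assume "z \<noteq> w"
      then consider "z < w" | "w < z" by linarith
      then show False
      proof cases
        case 1
        have "z * exp z < w * exp w"
          using 1 zpos by (intro mult_strict_mono) auto
        then show False using that w by simp
      next
        case 2
        have "w * exp w < z * exp z"
          using 2 wpos by (intro mult_strict_mono) auto
        then show False using that w by simp
      qed
    qed
  qed
  have "lambertW y = w" unfolding lambertW_def
    by (rule the_equality) (use wpos w uniq in auto)
  then show ?thesis using wpos w by simp
qed

lemma key_pointwise:
  fixes \<eta> T \<theta> v u y \<omega> q :: real and P :: bool and f :: "real \<Rightarrow> real"
  assumes \<eta>: "\<eta> > 0" and T: "T > 0" and \<theta>: "\<theta> > 0" and v: "v > 0"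
    and w: "\<omega> * exp \<omega> = \<theta> * v * \<eta>\<^sup>2 * T"
    and hq: "(P \<and> q = 0) \<or> (\<not> P \<and> q = \<omega> / (\<eta>\<^sup>2 * T) * exp (\<eta> * sqrt T * y) + \<theta> * u)"
  shows "exp (- \<theta> * (f (\<omega> / (\<theta> * v * \<eta>\<^sup>2 * T) * exp (\<eta> * sqrt T * y)) - u
                    - \<omega> / (\<theta> * \<eta>\<^sup>2 * T) * exp (\<eta> * sqrt T * y)) * (if P then 1 else 0))
         * (exp (- (\<omega> / (\<eta>\<^sup>2 * T)) * (exp (\<eta> * sqrt T * y) - 1 - \<eta> * sqrt T * y)) * exp q)
       = (1 / exp (- (\<theta> * u + \<omega> / (\<eta>\<^sup>2 * T) + \<omega>\<^sup>2 / (2 * \<eta>\<^sup>2 * T))))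
         * (exp (- \<theta> * f (exp (\<eta> * sqrt T * (y - \<omega> / (\<eta> * sqrt T)))) * (if P then 1 else 0))
            * exp (\<omega> / (\<eta> * sqrt T) * y - (\<omega> / (\<eta> * sqrt T))\<^sup>2 / 2))"
proof -
  define s where "s = \<eta> * sqrt T"
  have s: "s > 0" using \<eta> T by (simp add: s_def)
  have s2: "s\<^sup>2 = \<eta>\<^sup>2 * T" using T by (simp add: s_def power_mult_distrib)
  have a: "\<eta>\<^sup>2 * T > 0" using \<eta> T by simp
  have wpos: "\<omega> \<noteq> 0" using w \<theta> v a by (metis mult_eq_0_iff mult_pos_pos not_less_iff_gr_or_eq mult.assoc)
  have e1: "\<omega> / (\<theta> * v * \<eta>\<^sup>2 * T) = exp (- \<omega>)"
    using wpos by (simp add: w[symmetric] exp_minus inverse_eq_divide)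
  have e2: "\<omega> / (\<theta> * \<eta>\<^sup>2 * T) = v * exp (- \<omega>)"
  proof -
    have "\<omega> / (\<theta> * \<eta>\<^sup>2 * T) = v * (\<omega> / (\<theta> * v * \<eta>\<^sup>2 * T))"
      using v \<theta> a by (simp add: field_simps)
    then show ?thesis using e1 by simp
  qed
  have e3: "\<omega> / (\<eta>\<^sup>2 * T) = \<theta> * v * exp (- \<omega>)"
  proof -
    have "\<omega> / (\<eta>\<^sup>2 * T) = \<theta> * v * (\<omega> / (\<theta> * v * \<eta>\<^sup>2 * T))"
      using v \<theta> a by (simp add: field_simps)
    then show ?thesis using e1 by simp
  qed
  have e4: "exp (s * (y - \<omega> / s)) = exp (- \<omega>) * exp (s * y)"
    using s by (simp add: right_diff_distrib mult_exp_exp exp_diff exp_minus field_simps)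
  have e5: "\<omega> / s * y - (\<omega> / s)\<^sup>2 / 2 = \<theta> * v * exp (- \<omega>) * s * y - \<omega>\<^sup>2 / (2 * \<eta>\<^sup>2 * T)"
  proof -
    have "\<omega> / s = (\<omega> / (\<eta>\<^sup>2 * T)) * s" using s s2 a \<eta> T by (simp add: field_simps power2_eq_square)
    then have "\<omega> / s = \<theta> * v * exp (- \<omega>) * s" using e3 by simp
    moreover have "(\<omega> / s)\<^sup>2 / 2 = \<omega>\<^sup>2 / (2 * \<eta>\<^sup>2 * T)" using s2 s by (simp add: power_divide)
    ultimately show ?thesis by simp
  qed
  have e6: "\<omega>\<^sup>2 / (2 * \<eta>\<^sup>2 * T) = \<omega>\<^sup>2 / (2 * (\<eta>\<^sup>2 * T))" by (simp add: mult.assoc)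
  define X where "X = exp (- \<omega>) * exp (s * y)"
  define Q where "Q = \<omega>\<^sup>2 / (2 * \<eta>\<^sup>2 * T)"
  have inv: "1 / exp (- z) = exp z" for z :: real by (simp add: exp_minus divide_inverse)
  show ?thesis
  proof (cases P)
    case True
    then have q: "q = 0" using hq by auto
    show ?thesis unfolding s_def[symmetric] e1 e2 e3 e4 e5 inv Q_def[symmetric] q using True
      apply (simp only: if_True mult_1_right exp_zero mult_exp_exp)
      apply (rule arg_cong[where f=exp])
      by (simp add: algebra_simps)
  next
    case False
    then have q: "q = \<theta> * v * exp (- \<omega>) * exp (s * y) + \<theta> * u" using hq e3 s_def by auto
    show ?thesis unfolding s_def[symmetric] e1 e2 e3 e4 e5 inv Q_def[symmetric] q using False
      apply (simp only: if_False mult_0_right mult_1_right exp_zero mult_exp_exp mult_1_left)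
      apply (rule arg_cong[where f=exp])
      by (simp add: algebra_simps)
  qed
qed

lemma ind_eq:
  fixes s y c :: real and \<beta> :: ereal
  assumes s: "s > 0" and \<beta>: "0 \<le> \<beta>"
  shows "(ereal y \<le> ereal_ln \<beta> / ereal s + ereal (c / s)) = (ereal (exp (s * (y - c / s))) \<le> \<beta>)"
proof (cases \<beta>)
  case (real b)
  show ?thesis
  proof (cases "b = 0")
    case True
    then show ?thesis using real s by (simp add: ereal_ln_def)
  next
    case False
    then have b: "b > 0" using real \<beta> by simp
    have "(ereal y \<le> ereal_ln \<beta> / ereal s + ereal (c / s)) = (y \<le> ln b / s + c / s)"
      using real b s by (simp add: ereal_ln_def)
    also have "\<dots> = (s * y - c \<le> ln b)" using s by (simp add: field_simps)
    also have "\<dots> = (exp (s * y - c) \<le> b)" using b by (metis exp_le_cancel_iff exp_ln)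
    also have "\<dots> = (ereal (exp (s * (y - c / s))) \<le> \<beta>)" using real s
      by (simp add: right_diff_distrib)
    finally show ?thesis .
  qed
next
  case PInf
  then show ?thesis using s by (simp add: ereal_ln_def)
next
  case MInf
  then show ?thesis using \<beta> by simp
qed

lemma hq_lemma:
  fixes K e X t u v :: real and \<beta> :: ereal
  assumes KX: "K * e = t * v * X" and tv: "t * v > 0" and v: "v > 0" and \<beta>: "0 \<le> \<beta>"
    and u: "\<beta> \<noteq> \<infinity> \<Longrightarrow> u = - v * real_of_ereal \<beta>"
  shows "(ereal X \<le> \<beta> \<and> ereal_pos_part (ereal (K * e) - ereal (t * v) * \<beta>) = 0)
       \<or> (\<not> ereal X \<le> \<beta> \<and> ereal_pos_part (ereal (K * e) - ereal (t * v) * \<beta>) = K * e + t * u)"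
proof (cases \<beta>)
  case (real b)
  have u': "t * u = - (t * v * b)" using u real by simp
  have q: "ereal_pos_part (ereal (K * e) - ereal (t * v) * \<beta>) = max (K * e - t * v * b) 0"
    using real by (simp add: ereal_pos_part_def max_def)
  have "(X \<le> b) = (t * v * X \<le> t * v * b)" using tv by (simp add: mult_le_cancel_left_pos)
  then show ?thesis unfolding q u' using real KX by auto
next
  case PInf
  have "ereal (t * v) * \<beta> = \<infinity>" using PInf tv by (auto simp: ereal_mult_infty)
  then show ?thesis using PInf by (simp add: ereal_pos_part_def)
next
  case MInf
  then show ?thesis using \<beta> by simp
qed
theorem theorem1:
  fixes M :: "'a measure" and N :: "'a \<Rightarrow> real"
    and \<eta> T \<theta> v u :: real and \<beta> :: ereal and f :: "real \<Rightarrow> real"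
  assumes M: "prob_space M"
    and N: "distributed M lborel N (\<lambda>x. ennreal (std_normal_density x))"
    and \<eta>: "\<eta> > 0" and T: "T > 0" and \<theta>: "\<theta> > 0" and v: "v > 0"
    and \<beta>: "0 \<le> \<beta>"
    and f_meas: "f \<in> borel_measurable borel"
    and f_bdd: "\<exists>c. \<forall>x. 0 \<le> x \<and> ereal x \<le> \<beta> \<longrightarrow> c \<le> f x"
    and u: "\<beta> \<noteq> \<infinity> \<Longrightarrow> u = - v * real_of_ereal \<beta>"
    and hyp: "ereal (lambertW (\<theta> * v * \<eta>\<^sup>2 * T) / (\<eta>\<^sup>2 * T)
                 + (lambertW (\<theta> * v * \<eta>\<^sup>2 * T))\<^sup>2 / (2 * \<eta>\<^sup>2 * T)) \<le> ereal (\<theta> * v) * \<beta>"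
  shows
    "(let \<omega> = lambertW (\<theta> * v * \<eta>\<^sup>2 * T);
          s = \<eta> * sqrt T;
          L\<^sub>\<beta> = exp (- (\<theta> * u + \<omega> / (\<eta>\<^sup>2 * T) + \<omega>\<^sup>2 / (2 * \<eta>\<^sup>2 * T)));
          \<phi> = (\<lambda>y. exp (- (\<omega> / (\<eta>\<^sup>2 * T)) * (exp (s * y) - 1 - s * y))
                   * exp (ereal_pos_part (ereal (\<omega> / (\<eta>\<^sup>2 * T) * exp (s * y)) - ereal (\<theta> * v) * \<beta>)))
      in (\<integral>\<^sup>+ x. ennreal (exp (- \<theta> * f (exp (s * N x))
                    * (if ereal (exp (s * N x)) \<le> \<beta> then 1 else 0))) \<partial>M)
         = ennreal L\<^sub>\<beta> *
           (\<integral>\<^sup>+ x. ennreal (exp (- \<theta> * (f (\<omega> / (\<theta> * v * \<eta>\<^sup>2 * T) * exp (s * N x)) - u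
                    - \<omega> / (\<theta> * \<eta>\<^sup>2 * T) * exp (s * N x))
                    * (if ereal (N x) \<le> ereal_ln \<beta> / ereal s + ereal (\<omega> / s) then 1 else 0))
                   * \<phi> (N x)) \<partial>M))"
  proof -
  define a where "a = \<theta> * v * \<eta>\<^sup>2 * T"
  have apos: "a > 0" using \<eta> T \<theta> v by (simp add: a_def)
  define \<omega> where "\<omega> = lambertW (\<theta> * v * \<eta>\<^sup>2 * T)"
  have w: "\<omega> * exp \<omega> = \<theta> * v * \<eta>\<^sup>2 * T" "\<omega> > 0"
    using lambertW_prop[OF apos] by (simp_all add: \<omega>_def a_def)
  define s where "s = \<eta> * sqrt T"
  have s: "s > 0" using \<eta> T by (simp add: s_def)
  define m where "m = \<omega> / s"
  define L where "L = exp (- (\<theta> * u + \<omega> / (\<eta>\<^sup>2 * T) + \<omega>\<^sup>2 / (2 * \<eta>\<^sup>2 * T)))"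
  have Lpos: "L > 0" by (simp add: L_def)
  define \<phi> where "\<phi> = (\<lambda>y. exp (- (\<omega> / (\<eta>\<^sup>2 * T)) * (exp (s * y) - 1 - s * y))
                   * exp (ereal_pos_part (ereal (\<omega> / (\<eta>\<^sup>2 * T) * exp (s * y)) - ereal (\<theta> * v) * \<beta>)))"
  define g where "g = (\<lambda>y. ennreal (exp (- \<theta> * f (exp (s * y))
                    * (if ereal (exp (s * y)) \<le> \<beta> then 1 else 0))))"
  define H where "H = (\<lambda>y. ennreal (exp (- \<theta> * (f (\<omega> / (\<theta> * v * \<eta>\<^sup>2 * T) * exp (s * y)) - u
                    - \<omega> / (\<theta> * \<eta>\<^sup>2 * T) * exp (s * y))
                    * (if ereal y \<le> ereal_ln \<beta> / ereal s + ereal (\<omega> / s) then 1 else 0))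
                   * \<phi> y))"
  define G where "G = (\<lambda>y. g (y - m) * ennreal (exp (m * y - m\<^sup>2 / 2)))"
  note f_meas[measurable]
  have g_meas[measurable]: "g \<in> borel_measurable borel" unfolding g_def by measurable
  have G_meas[measurable]: "G \<in> borel_measurable borel" unfolding G_def by measurable
  have Nm0: "N \<in> measurable M lborel" using N by (rule distributed_measurable)
  have Nm[measurable]: "N \<in> borel_measurable M" using Nm0 by simp
  have HG: "H y = ennreal (1 / L) * G y" for y
  proof -
    have e3: "\<omega> / (\<eta>\<^sup>2 * T) * exp (s * y) = \<theta> * v * exp (s * (y - \<omega> / s))"
    proof -
      have "\<omega> / (\<eta>\<^sup>2 * T) = \<theta> * v * (\<omega> / (\<theta> * v * \<eta>\<^sup>2 * T))"
        using v \<theta> \<eta> T by (simp add: field_simps)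
      also have "\<omega> / (\<theta> * v * \<eta>\<^sup>2 * T) = exp (- \<omega>)"
        using w by (simp add: w(1)[symmetric] exp_minus inverse_eq_divide)
      finally have 1: "\<omega> / (\<eta>\<^sup>2 * T) = \<theta> * v * exp (- \<omega>)" .
      have 2: "exp (s * (y - \<omega> / s)) = exp (- \<omega>) * exp (s * y)"
        using s by (simp add: right_diff_distrib mult_exp_exp exp_diff exp_minus field_simps)
      show ?thesis unfolding 1 2 by simp
    qed
    have hq: "(ereal (exp (s * (y - \<omega> / s))) \<le> \<beta> \<and> ereal_pos_part (ereal (\<omega> / (\<eta>\<^sup>2 * T) * exp (s * y)) - ereal (\<theta> * v) * \<beta>) = 0)
       \<or> (\<not> ereal (exp (s * (y - \<omega> / s))) \<le> \<beta> \<and> ereal_pos_part (ereal (\<omega> / (\<eta>\<^sup>2 * T) * exp (s * y)) - ereal (\<theta> * v) * \<beta>) = \<omega> / (\<eta>\<^sup>2 * T) * exp (s * y) + \<theta> * u)"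
      by (rule hq_lemma[OF e3]) (use \<theta> v \<beta> u in auto)
    note k = key_pointwise[OF \<eta> T \<theta> v w(1) hq[unfolded s_def], of f, folded s_def]
    have ie: "(ereal y \<le> ereal_ln \<beta> / ereal s + ereal (\<omega> / s)) = (ereal (exp (s * (y - \<omega> / s))) \<le> \<beta>)"
      by (rule ind_eq[OF s \<beta>])
    have "H y = ennreal ((1 / L) * (exp (- \<theta> * f (exp (s * (y - m))) * (if ereal (exp (s * (y - m))) \<le> \<beta> then 1 else 0))
            * exp (m * y - m\<^sup>2 / 2)))"
      unfolding H_def \<phi>_def ie L_def m_def using k by simp
    also have "\<dots> = ennreal (1 / L) * G y"
    proof -
      have em: "ennreal (1 / L * (B * C)) = ennreal (1 / L) * (ennreal B * ennreal C)"
        if "B \<ge> 0" "C \<ge> 0" for B C :: real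
        using that Lpos ennreal_mult[of "1 / L" "B * C"] ennreal_mult[of B C] by simp
      show ?thesis unfolding G_def g_def by (rule em) auto
    qed
    finally show ?thesis .
  qed
  have dens: "ennreal (std_normal_density (y - m)) * g (y - m) = ennreal (std_normal_density y) * G y" for y
  proof -
    have "std_normal_density (y - m) = std_normal_density y * exp (m * y - m\<^sup>2 / 2)"
      unfolding std_normal_density_def
      by (simp add: mult_exp_exp power2_eq_square algebra_simps add_divide_distrib diff_divide_distrib)
    then show ?thesis unfolding G_def by (simp add: ennreal_mult mult_ac)
  qed
  have "(\<integral>\<^sup>+x. g (N x) \<partial>M) = (\<integral>\<^sup>+y. ennreal (std_normal_density y) * g y \<partial>lborel)"
    by (rule distributed_nn_integral[OF N, symmetric]) simp
  also have "\<dots> = (\<integral>\<^sup>+y. ennreal (std_normal_density (- m + 1 * y)) * g (- m + 1 * y) \<partial>lborel)"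
    by (subst nn_integral_real_affine[where c=1 and t="-m"]) auto
  also have "\<dots> = (\<integral>\<^sup>+y. ennreal (std_normal_density y) * G y \<partial>lborel)"
    using dens by simp
  also have "\<dots> = (\<integral>\<^sup>+x. G (N x) \<partial>M)"
    by (rule distributed_nn_integral[OF N]) simp
  finally have eq1: "(\<integral>\<^sup>+x. g (N x) \<partial>M) = (\<integral>\<^sup>+x. G (N x) \<partial>M)" .
  have "(\<integral>\<^sup>+x. H (N x) \<partial>M) = (\<integral>\<^sup>+x. ennreal (1 / L) * G (N x) \<partial>M)"
    using HG by simp
  also have "\<dots> = ennreal (1 / L) * (\<integral>\<^sup>+x. G (N x) \<partial>M)"
    by (rule nn_integral_cmult) measurable
  finally have eq2: "ennreal L * (\<integral>\<^sup>+x. H (N x) \<partial>M) = (\<integral>\<^sup>+x. G (N x) \<partial>M)"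
    using Lpos by (simp add: mult.assoc[symmetric] ennreal_mult[symmetric])
  have main: "(\<integral>\<^sup>+x. g (N x) \<partial>M) = ennreal L * (\<integral>\<^sup>+x. H (N x) \<partial>M)"
    using eq1 eq2 by simp
  show ?thesis
    using main unfolding Let_def g_def H_def \<phi>_def L_def s_def \<omega>_def by simp
qed

end
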